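(* Let $G$ be a graph with an odd number $n$ of vertices and stubbornness levels $\alpha_x\in(0,1)$. Let $\mathcal{S}=(S,\overline{S})$ be a good bisection of $G$ and let $u$ be a good vertex of $\mathcal{S}$. Then $G$ admits a subvertable belief assignment $\mathbf{b}$ such that $u$ is a swing vertex for $\mathbf{b}$.
   Context: $G$ is a finite simple undirected graph, $N(x)$ the neighbors of $x$. For vertex sets $A,B$, $W(A,B)$ is the number of edges with one endpoint in $A$ and the other in $B$ (singletons written without braces). $a_x=\lfloor\alpha_x/(1-\alpha_x)\rfloor$. A bisection $\mathcal{S}=(S,\overline{S})$ is a partition of the vertex set with $|S|=\frac{n+1}{2}$, $|\overline{S}|=\frac{n-1}{2}$. The deficiency is $\mathrm{def}_{\mathcal{S}}(x)=W(x,S)-W(x,\overline{S})$ if $x\in S$ and $W(x,\overline{S})-W(x,S)$ if $x\in\overline{S}$. $\mathcal{S}$ is good if (1) $\mathrm{def}_{\mathcal{S}}(x)\ge -a_x$ for all $x\in S$, and (2) some $u\in S$ has $\mathrm{def}_{\mathcal{S}}(u)\ge a_u+1$; such vertices $u$ are the good vertices of $\mathcal{S}$. Game: belief assignment $\mathbf{b}\in\{0,1\}^n$, state $\mathbf{s}\in\{0,1\}^n$, cost $c_i(\mathbf{s})=\alpha_i|\mathbf{s}(i)-\mathbf{b}(i)|+(1-\alpha_i)\sum_{j\in N(i)}|\mathbf{s}(i)-\mathbf{s}(j)|$; truthful state $\mathbf{s}=\mathbf{b}$; a best response move changes one player's opinion to the other value when this strictly lowers its cost; an equilibrium is a state where no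 single player can strictly lower its cost by switching. $(\mathbf{s}_{-i},a)$ denotes $\mathbf{s}$ with coordinate $i$ replaced by $a$. $\mathbf{b}$ is subvertable if a majority of vertices have belief $0$ and some sequence of best response moves from the truthful state reaches an equilibrium with a majority of opinion $1$. For a subvertable $\mathbf{b}$ with exactly $\frac{n+1}{2}$ vertices of belief $0$, a vertex $u$ is a swing vertex if: $\mathbf{b}(u)=0$; $c_u(\mathbf{b})>c_u(\mathbf{b}')$ with $\mathbf{b}'=(\mathbf{b}_{-u},1)$; and for every $x$ with $\mathbf{b}(x)=1$, $c_x(\mathbf{b}')\le c_x((\mathbf{b}'_{-x},0))$. *)

theory Defs
  imports Complex_Main
begin

(* A finite simple undirected graph: finite vertex set V, symmetric irreflexive
   adjacency relation E living on V. Opinions/beliefs: True = 1, False = 0. *)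
definition simple_graph :: "'a set \<Rightarrow> ('a \<Rightarrow> 'a \<Rightarrow> bool) \<Rightarrow> bool" where
  "simple_graph V E \<longleftrightarrow> finite V \<and> (\<forall>x y. E x y \<longrightarrow> x \<in> V \<and> y \<in> V)
     \<and> (\<forall>x y. E x y \<longrightarrow> E y x) \<and> (\<forall>x. \<not> E x x)"

definition nbrs :: "'a set \<Rightarrow> ('a \<Rightarrow> 'a \<Rightarrow> bool) \<Rightarrow> 'a \<Rightarrow> 'a set" where
  "nbrs V E x = {y \<in> V. E x y}"

definition W :: "('a \<Rightarrow> 'a \<Rightarrow> bool) \<Rightarrow> 'a set \<Rightarrow> 'a set \<Rightarrow> nat" where
  "W E A B = card {{x, y} | x y. x \<in> A \<and> y \<in> B \<and> E x y}"

definition a_val :: "('a \<Rightarrow> real) \<Rightarrow> 'a \<Rightarrow> int" where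
  "a_val \<alpha> x = \<lfloor>\<alpha> x / (1 - \<alpha> x)\<rfloor>"

definition bisection :: "'a set \<Rightarrow> 'a set \<Rightarrow> bool" where
  "bisection V S \<longleftrightarrow> S \<subseteq> V \<and> card S = (card V + 1) div 2 \<and> card (V - S) = (card V - 1) div 2"

definition deficiency :: "'a set \<Rightarrow> ('a \<Rightarrow> 'a \<Rightarrow> bool) \<Rightarrow> 'a set \<Rightarrow> 'a \<Rightarrow> int" where
  "deficiency V E S x =
     (if x \<in> S then int (W E {x} S) - int (W E {x} (V - S))
      else int (W E {x} (V - S)) - int (W E {x} S))"

definition good_bisection :: "'a set \<Rightarrow> ('a \<Rightarrow> 'a \<Rightarrow> bool) \<Rightarrow> ('a \<Rightarrow> real) \<Rightarrow> 'a set \<Rightarrow> bool" where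
  "good_bisection V E \<alpha> S \<longleftrightarrow> bisection V S
     \<and> (\<forall>x\<in>S. deficiency V E S x \<ge> - a_val \<alpha> x)
     \<and> (\<exists>u\<in>S. deficiency V E S u \<ge> a_val \<alpha> u + 1)"

definition good_vertex :: "'a set \<Rightarrow> ('a \<Rightarrow> 'a \<Rightarrow> bool) \<Rightarrow> ('a \<Rightarrow> real) \<Rightarrow> 'a set \<Rightarrow> 'a \<Rightarrow> bool" where
  "good_vertex V E \<alpha> S u \<longleftrightarrow> good_bisection V E \<alpha> S \<and> u \<in> S \<and> deficiency V E S u \<ge> a_val \<alpha> u + 1"

definition cost :: "'a set \<Rightarrow> ('a \<Rightarrow> 'a \<Rightarrow> bool) \<Rightarrow> ('a \<Rightarrow> real) \<Rightarrow> ('a \<Rightarrow> bool) \<Rightarrow> 'a \<Rightarrow> ('a \<Rightarrow> bool) \<Rightarrow> real" where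
  "cost V E \<alpha> b i s = \<alpha> i * (if s i = b i then 0 else 1)
     + (1 - \<alpha> i) * real (card {j \<in> nbrs V E i. s i \<noteq> s j})"

definition br_move :: "'a set \<Rightarrow> ('a \<Rightarrow> 'a \<Rightarrow> bool) \<Rightarrow> ('a \<Rightarrow> real) \<Rightarrow> ('a \<Rightarrow> bool) \<Rightarrow> ('a \<Rightarrow> bool) \<Rightarrow> ('a \<Rightarrow> bool) \<Rightarrow> bool" where
  "br_move V E \<alpha> b s s' \<longleftrightarrow> (\<exists>i\<in>V. s' = s(i := \<not> s i) \<and> cost V E \<alpha> b i s' < cost V E \<alpha> b i s)"

definition equilibrium :: "'a set \<Rightarrow> ('a \<Rightarrow> 'a \<Rightarrow> bool) \<Rightarrow> ('a \<Rightarrow> real) \<Rightarrow> ('a \<Rightarrow> bool) \<Rightarrow> ('a \<Rightarrow> bool) \<Rightarrow> bool" where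
  "equilibrium V E \<alpha> b s \<longleftrightarrow> (\<forall>i\<in>V. \<not> cost V E \<alpha> b i (s(i := \<not> s i)) < cost V E \<alpha> b i s)"

definition subvertable :: "'a set \<Rightarrow> ('a \<Rightarrow> 'a \<Rightarrow> bool) \<Rightarrow> ('a \<Rightarrow> real) \<Rightarrow> ('a \<Rightarrow> bool) \<Rightarrow> bool" where
  "subvertable V E \<alpha> b \<longleftrightarrow> 2 * card {x \<in> V. \<not> b x} > card V
     \<and> (\<exists>s. (br_move V E \<alpha> b)\<^sup>*\<^sup>* b s \<and> equilibrium V E \<alpha> b s \<and> 2 * card {x \<in> V. s x} > card V)"

definition swing_vertex :: "'a set \<Rightarrow> ('a \<Rightarrow> 'a \<Rightarrow> bool) \<Rightarrow> ('a \<Rightarrow> real) \<Rightarrow> ('a \<Rightarrow> bool) \<Rightarrow> 'a \<Rightarrow> bool" where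
  "swing_vertex V E \<alpha> b u \<longleftrightarrow> subvertable V E \<alpha> b \<and> card {x \<in> V. \<not> b x} = (card V + 1) div 2
     \<and> u \<in> V \<and> \<not> b u
     \<and> cost V E \<alpha> b u b > cost V E \<alpha> b u (b(u := True))
     \<and> (\<forall>x\<in>V. b x \<longrightarrow> cost V E \<alpha> b x (b(u := True)) \<le> cost V E \<alpha> b x ((b(u := True))(x := False)))"

end

theory Submission
  imports Defs
begin

definition Tc :: "'a set \<Rightarrow> ('a \<Rightarrow> 'a \<Rightarrow> bool) \<Rightarrow> ('a \<Rightarrow> bool) \<Rightarrow> 'a \<Rightarrow> nat" where
  "Tc V E s i = card {j \<in> nbrs V E i. s j}"
definition Fc :: "'a set \<Rightarrow> ('a \<Rightarrow> 'a \<Rightarrow> bool) \<Rightarrow> ('a \<Rightarrow> bool) \<Rightarrow> 'a \<Rightarrow> nat" where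
  "Fc V E s i = card {j \<in> nbrs V E i. \<not> s j}"

lemma cost_eq:
  "cost V E \<alpha> b i s = \<alpha> i * (if s i = b i then 0 else 1)
     + (1 - \<alpha> i) * real (if s i then Fc V E s i else Tc V E s i)"
proof -
  have "{j \<in> nbrs V E i. s i \<noteq> s j} = (if s i then {j \<in> nbrs V E i. \<not> s j} else {j \<in> nbrs V E i. s j})"
    by auto
  then show ?thesis unfolding cost_def Tc_def Fc_def by simp
qed

lemma nbrs_not_self: "simple_graph V E \<Longrightarrow> i \<notin> nbrs V E i"
  unfolding simple_graph_def nbrs_def by auto

lemma finite_nbrs: "simple_graph V E \<Longrightarrow> finite (nbrs V E i)"
  unfolding simple_graph_def nbrs_def by auto

lemma Tc_upd_self: "simple_graph V E \<Longrightarrow> Tc V E (s(i:=v)) i = Tc V E s i"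
proof -
  assume g: "simple_graph V E"
  have "{j \<in> nbrs V E i. (s(i:=v)) j} = {j \<in> nbrs V E i. s j}"
    using nbrs_not_self[OF g, of i] by auto
  then show ?thesis unfolding Tc_def by simp
qed

lemma Fc_upd_self: "simple_graph V E \<Longrightarrow> Fc V E (s(i:=v)) i = Fc V E s i"
proof -
  assume g: "simple_graph V E"
  have "{j \<in> nbrs V E i. \<not> (s(i:=v)) j} = {j \<in> nbrs V E i. \<not> s j}"
    using nbrs_not_self[OF g, of i] by auto
  then show ?thesis unfolding Fc_def by simp
qed

lemma Tc_mono: "simple_graph V E \<Longrightarrow> Tc V E s k \<le> Tc V E (s(i:=True)) k"
  unfolding Tc_def by (rule card_mono) (auto simp: finite_nbrs)

lemma Fc_mono: "simple_graph V E \<Longrightarrow> Fc V E (s(i:=True)) k \<le> Fc V E s k"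
  unfolding Fc_def by (rule card_mono) (auto simp: finite_nbrs)

lemma W_eq: assumes "simple_graph V E" shows "W E {x} A = card {j \<in> nbrs V E x. j \<in> A}"
proof -
  have irr: "\<not> E x x" using assms unfolding simple_graph_def by auto
  have "{{x', y} | x' y. x' \<in> {x} \<and> y \<in> A \<and> E x' y} = (\<lambda>y. {x, y}) ` {j \<in> nbrs V E x. j \<in> A}"
    using assms unfolding simple_graph_def nbrs_def by auto
  moreover have "inj_on (\<lambda>y. {x, y}) {j \<in> nbrs V E x. j \<in> A}"
    using irr unfolding inj_on_def nbrs_def by (auto simp: doubleton_eq_iff)
  ultimately show ?thesis unfolding W_def by (simp add: card_image)
qed

lemma Tc_ge: assumes "simple_graph V E" "\<forall>x\<in>S. s x" shows "W E {i} S \<le> Tc V E s i"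
  unfolding W_eq[OF assms(1)] Tc_def using assms by (intro card_mono) (auto simp: finite_nbrs)

lemma Fc_le: assumes "simple_graph V E" "\<forall>x\<in>S. s x" shows "Fc V E s i \<le> W E {i} (V - S)"
  unfolding W_eq[OF assms(1)] Fc_def using assms
  by (intro card_mono) (auto simp: finite_nbrs nbrs_def simple_graph_def)

lemma key:
  assumes g: "simple_graph V E" and al: "\<forall>x\<in>V. 0 < \<alpha> x \<and> \<alpha> x < 1"
    and hS: "\<forall>x\<in>S. b x \<longrightarrow> (1 - \<alpha> x) * (real (W E {x} (V - S)) - real (W E {x} S)) \<le> \<alpha> x"
    and bS: "\<forall>x. b x \<longrightarrow> x \<in> S"
  shows "(\<forall>x\<in>S. s x) \<Longrightarrow> (\<forall>i\<in>V. s i \<and> \<not> b i \<longrightarrow> \<alpha> i + (1 - \<alpha> i) * Fc V E s i \<le> (1 - \<alpha> i) * Tc V E s i)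
    \<Longrightarrow> \<exists>t. (br_move V E \<alpha> b)\<^sup>*\<^sup>* s t \<and> equilibrium V E \<alpha> b t \<and> (\<forall>x\<in>S. t x)"
proof (induction "card {x\<in>V. \<not> s x}" arbitrary: s rule: less_induct)
  case less
  note inv = less.prems(2)
  show ?case
  proof (cases "equilibrium V E \<alpha> b s")
    case True
    then show ?thesis using less.prems by blast
  next
    case False
    then obtain i where iV: "i \<in> V" and imp: "cost V E \<alpha> b i (s(i := \<not> s i)) < cost V E \<alpha> b i s"
      unfolding equilibrium_def by blast
    have a0: "0 < \<alpha> i" "\<alpha> i < 1" using al iV by auto
    have T1: "W E {i} S \<le> Tc V E s i" using Tc_ge[OF g less.prems(1)] .
    have F1: "Fc V E s i \<le> W E {i} (V - S)" using Fc_le[OF g less.prems(1)] .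
    have nsi: "\<not> s i"
    proof
      assume si: "s i"
      show False
      proof (cases "b i")
        case True
        have "i \<in> S" using bS True by auto
        have h: "(1 - \<alpha> i) * (real (W E {i} (V - S)) - real (W E {i} S)) \<le> \<alpha> i"
          using hS \<open>i \<in> S\<close> True by auto
        have "(1 - \<alpha> i) * real (Fc V E s i) \<le> (1 - \<alpha> i) * real (W E {i} (V - S))"
          using F1 a0 by (intro mult_left_mono) auto
        moreover have "(1 - \<alpha> i) * real (W E {i} S) \<le> (1 - \<alpha> i) * real (Tc V E s i)"
          using T1 a0 by (intro mult_left_mono) auto
        ultimately have "(1 - \<alpha> i) * real (Fc V E s i) \<le> \<alpha> i + (1 - \<alpha> i) * real (Tc V E s i)"
          using h by (simp add: algebra_simps)
        then show False using imp si True
          by (simp add: cost_eq Tc_upd_self[OF g] Fc_upd_self[OF g])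
      next
        case False
        have "\<alpha> i + (1 - \<alpha> i) * Fc V E s i \<le> (1 - \<alpha> i) * Tc V E s i"
          using inv iV si False by blast
        then show False using imp si False
          by (simp add: cost_eq Tc_upd_self[OF g] Fc_upd_self[OF g])
      qed
    qed
    have nbi: "\<not> b i" using bS less.prems(1) nsi by auto
    define s' where "s' = s(i := True)"
    have flip: "\<alpha> i + (1 - \<alpha> i) * Fc V E s i < (1 - \<alpha> i) * Tc V E s i"
      using imp nsi nbi by (simp add: cost_eq Tc_upd_self[OF g] Fc_upd_self[OF g])
    have p1: "\<forall>x\<in>S. s' x" using less.prems(1) by (simp add: s'_def)
    have p2: "\<forall>k\<in>V. s' k \<and> \<not> b k \<longrightarrow> \<alpha> k + (1 - \<alpha> k) * Fc V E s' k \<le> (1 - \<alpha> k) * Tc V E s' k"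
    proof (intro ballI impI)
      fix k assume kV: "k \<in> V" and hk: "s' k \<and> \<not> b k"
      show "\<alpha> k + (1 - \<alpha> k) * Fc V E s' k \<le> (1 - \<alpha> k) * Tc V E s' k"
      proof (cases "k = i")
        case True
        then show ?thesis using flip unfolding s'_def
          by (simp add: Tc_upd_self[OF g] Fc_upd_self[OF g])
      next
        case False
        have sk: "s k" using hk False by (simp add: s'_def)
        have old: "\<alpha> k + (1 - \<alpha> k) * Fc V E s k \<le> (1 - \<alpha> k) * Tc V E s k"
          using inv kV sk hk by auto
        have ak: "0 \<le> 1 - \<alpha> k" using al kV by auto
        have "(1 - \<alpha> k) * real (Fc V E s' k) \<le> (1 - \<alpha> k) * real (Fc V E s k)"
          using Fc_mono[OF g, of s i k] ak unfolding s'_def by (intro mult_left_mono) auto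
        moreover have "(1 - \<alpha> k) * real (Tc V E s k) \<le> (1 - \<alpha> k) * real (Tc V E s' k)"
          using Tc_mono[OF g, of s k i] ak unfolding s'_def by (intro mult_left_mono) auto
        ultimately show ?thesis using old by linarith
      qed
    qed
    have fin: "finite V" using g unfolding simple_graph_def by auto
    have eqset: "{x\<in>V. \<not> s' x} = {x\<in>V. \<not> s x} - {i}" by (auto simp: s'_def)
    have "card {x\<in>V. \<not> s' x} < card {x\<in>V. \<not> s x}"
      unfolding eqset using fin iV nsi by (intro card_Diff1_less) auto
    from less.hyps[OF this p1 p2] obtain t where
      t: "(br_move V E \<alpha> b)\<^sup>*\<^sup>* s' t" "equilibrium V E \<alpha> b t" "\<forall>x\<in>S. t x" by blast
    have "br_move V E \<alpha> b s s'"
      unfolding br_move_def using iV imp nsi by (intro bexI[of _ i]) (auto simp: s'_def)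
    then have "(br_move V E \<alpha> b)\<^sup>*\<^sup>* s t" using t(1) by (rule converse_rtranclp_into_rtranclp)
    then show ?thesis using t by blast
  qed
qed

lemma a_bounds:
  assumes "0 < \<alpha> x" "\<alpha> x < 1"
  shows "real_of_int (a_val \<alpha> x) \<le> \<alpha> x / (1 - \<alpha> x)" "\<alpha> x / (1 - \<alpha> x) < real_of_int (a_val \<alpha> x) + 1"
  unfolding a_val_def by linarith+

theorem lemma1:
  fixes V :: "'a set" and E :: "'a \<Rightarrow> 'a \<Rightarrow> bool" and \<alpha> :: "'a \<Rightarrow> real"
    and S :: "'a set" and u :: 'a
  assumes "simple_graph V E"
    and "odd (card V)"
    and "\<forall>x\<in>V. 0 < \<alpha> x \<and> \<alpha> x < 1"
    and "good_bisection V E \<alpha> S"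
    and "good_vertex V E \<alpha> S u"
  shows "\<exists>b. subvertable V E \<alpha> b \<and> swing_vertex V E \<alpha> b u"
proof -
  note g = assms(1) and al = assms(3)
  have bis: "bisection V S" and uS: "u \<in> S" and du: "deficiency V E S u \<ge> a_val \<alpha> u + 1"
    and dx: "\<forall>x\<in>S. deficiency V E S x \<ge> - a_val \<alpha> x"
    using assms(4,5) unfolding good_vertex_def good_bisection_def by auto
  have SV: "S \<subseteq> V" and cS: "card S = (card V + 1) div 2" and cVS: "card (V - S) = (card V - 1) div 2"
    using bis unfolding bisection_def by auto
  have fin: "finite V" using g unfolding simple_graph_def by auto
  have uV: "u \<in> V" using uS SV by auto
  have au: "0 < \<alpha> u" "\<alpha> u < 1" using al uV by auto
  define b where "b = (\<lambda>x. x \<in> S \<and> x \<noteq> u)"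
  define b' where "b' = b(u := True)"
  have b'S: "b' = (\<lambda>x. x \<in> S)" using uS by (auto simp: b'_def b_def fun_eq_iff)
  have du': "\<alpha> u < (1 - \<alpha> u) * (real (W E {u} S) - real (W E {u} (V - S)))"
  proof -
    have "\<alpha> u / (1 - \<alpha> u) < real (W E {u} S) - real (W E {u} (V - S))"
      using a_bounds[of \<alpha> u, OF au] du uS unfolding deficiency_def by simp
    then show ?thesis using au by (simp add: pos_divide_less_eq mult.commute)
  qed
  have hS: "\<forall>x\<in>S. b x \<longrightarrow> (1 - \<alpha> x) * (real (W E {x} (V - S)) - real (W E {x} S)) \<le> \<alpha> x"
  proof (intro ballI impI)
    fix x assume xS: "x \<in> S" and "b x"
    have ax: "0 < \<alpha> x" "\<alpha> x < 1" using al xS SV by auto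
    have "real (W E {x} (V - S)) - real (W E {x} S) \<le> \<alpha> x / (1 - \<alpha> x)"
    proof -
      have "int (W E {x} S) - int (W E {x} (V - S)) \<ge> - a_val \<alpha> x"
        using dx xS unfolding deficiency_def by auto
      then have "real (W E {x} (V - S)) - real (W E {x} S) \<le> real_of_int (a_val \<alpha> x)"
        by linarith
      then show ?thesis using a_bounds(1)[of \<alpha> x, OF ax] by linarith
    qed
    then show "(1 - \<alpha> x) * (real (W E {x} (V - S)) - real (W E {x} S)) \<le> \<alpha> x"
      using ax by (simp add: pos_le_divide_eq mult.commute)
  qed
  have bS: "\<forall>x. b x \<longrightarrow> x \<in> S" by (simp add: b_def)
  have sall: "\<forall>x\<in>S. b' x" by (simp add: b'S)
  have Tu: "Tc V E b' u = W E {u} S" unfolding b'S Tc_def W_eq[OF g] by simp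
  have Fu: "Fc V E b' u = W E {u} (V - S)" unfolding b'S Fc_def W_eq[OF g]
    by (rule arg_cong[where f=card]) (auto simp: nbrs_def)
  have inv: "\<forall>i\<in>V. b' i \<and> \<not> b i \<longrightarrow> \<alpha> i + (1 - \<alpha> i) * Fc V E b' i \<le> (1 - \<alpha> i) * Tc V E b' i"
  proof (intro ballI impI)
    fix i assume "i \<in> V" "b' i \<and> \<not> b i"
    then have "i = u" by (auto simp: b'_def b_def split: if_splits)
    then show "\<alpha> i + (1 - \<alpha> i) * Fc V E b' i \<le> (1 - \<alpha> i) * Tc V E b' i"
      using du' Tu Fu by (simp add: algebra_simps)
  qed
  obtain t where t: "(br_move V E \<alpha> b)\<^sup>*\<^sup>* b' t" "equilibrium V E \<alpha> b t" "\<forall>x\<in>S. t x"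
    using key[OF g al hS bS sall inv] by blast
  have Tb: "Tc V E b u = Tc V E b' u" unfolding b'_def using Tc_upd_self[OF g] by metis
  have Fb: "Fc V E b u = Fc V E b' u" unfolding b'_def using Fc_upd_self[OF g] by metis
  have costu: "cost V E \<alpha> b u b > cost V E \<alpha> b u b'"
    using du' Tu Fu Tb Fb by (simp add: cost_eq b'_def b_def algebra_simps)
  have mv: "br_move V E \<alpha> b b b'"
  proof -
    have "b' = b(u := \<not> b u)" by (simp add: b'_def b_def)
    then show ?thesis unfolding br_move_def using uV costu by blast
  qed
  have reach: "(br_move V E \<alpha> b)\<^sup>*\<^sup>* b t" using mv t(1) by (rule converse_rtranclp_into_rtranclp)
  have zeros: "{x\<in>V. \<not> b x} = insert u (V - S)" using uV SV by (auto simp: b_def)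
  have czeros: "card {x\<in>V. \<not> b x} = (card V + 1) div 2"
    unfolding zeros using uS fin cVS assms(2) by (simp add: card_insert_if) (cases "card V", auto)
  have maj0: "2 * card {x\<in>V. \<not> b x} > card V" using czeros assms(2) by (cases "card V") auto
  have "card S \<le> card {x\<in>V. t x}" using t(3) SV fin by (intro card_mono) auto
  then have maj1: "2 * card {x\<in>V. t x} > card V" using cS assms(2) by (cases "card V") auto
  have sub: "subvertable V E \<alpha> b" unfolding subvertable_def using maj0 reach t(2) maj1 by blast
  have last: "\<forall>x\<in>V. b x \<longrightarrow> cost V E \<alpha> b x b' \<le> cost V E \<alpha> b x (b'(x := False))"
  proof (intro ballI impI)
    fix x assume xV: "x \<in> V" and bx: "b x"
    have xS: "x \<in> S" using bx by (simp add: b_def)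
    have h: "(1 - \<alpha> x) * (real (W E {x} (V - S)) - real (W E {x} S)) \<le> \<alpha> x" using hS xS bx by auto
    have T: "Tc V E b' x = W E {x} S" unfolding b'S Tc_def W_eq[OF g] by simp
    have F: "Fc V E b' x = W E {x} (V - S)" unfolding b'S Fc_def W_eq[OF g]
      by (rule arg_cong[where f=card]) (auto simp: nbrs_def)
    show "cost V E \<alpha> b x b' \<le> cost V E \<alpha> b x (b'(x := False))"
      using h T F bx sall xS by (simp add: cost_eq Tc_upd_self[OF g] Fc_upd_self[OF g] algebra_simps)
  qed
  have "swing_vertex V E \<alpha> b u"
    unfolding swing_vertex_def using sub czeros uV costu last by (simp add: b'_def b_def)
  then show ?thesis using sub by blast
qed

end
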